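(* Let $n=2k$, let $r$ be an integer with $1<r<k$ and $\gcd(r,k)=1$, and let $\{u_1,\ldots,u_k\}$ be a basis of $\mathbb{F}_{2^k}$ over $\mathbb{F}_2$. Let $t$ be a positive integer, $F_1,\ldots,F_t$ reduced polynomials in $\mathbb{F}_2[X_1,\ldots,X_k]$, and $f_i(x)=F_i(\mathrm{Tr}^n_1(u_1x),\ldots,\mathrm{Tr}^n_1(u_kx))$. Then $\widehat H(x)=(\sum_{i=1}^{2^r-1}x^{(i2^{k-r}+1)(2^k-1)+1},f_1(x),\ldots,f_t(x))$ is a vectorial plateaued $(n,k+t)$-function if and only if the $(n,t)$-function $(f_1,\ldots,f_t)$ is vectorial plateaued. In particular, if $k>2$ and each $f_i$ is quadratic, then $\widehat H$ is a non-quadratic vectorial plateaued function.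
   Context: $\mathrm{Tr}^m_1(x)=\sum_{i=0}^{m-1}x^{2^i}$. The first coordinate $G(x)=\sum_{i=1}^{2^r-1}x^{(i2^{k-r}+1)(2^k-1)+1}$ takes values in $\mathbb{F}_{2^k}$, so $\widehat H:\mathbb{F}_{2^n}\to\mathbb{F}_{2^k}\times\mathbb{F}_2^t$ with components $\mathrm{Tr}^k_1(\lambda G(x))+\sum_iv_if_i(x)$, $(\lambda,v)\ne(0,0)$. A Boolean function $f$ is plateaued if $W_f(a)=\sum_x(-1)^{f(x)+\mathrm{Tr}^n_1(ax)}$ takes values in $\{0,\pm2^s\}$ for some $n/2\le s\le n$; a vectorial function is vectorial plateaued if all components are plateaued. Quadratic means algebraic degree at most 2. A reduced polynomial is a multilinear polynomial over $\mathbb{F}_2$. *)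

theory Defs
  imports Main
begin

text \<open>The ambient field F_{2^n} is modelled as a finite field type 'a with card UNIV = 2^n.
  Boolean functions are functions 'a => 'a taking values in {0,1} (the prime field F_2).\<close>

definition tr :: "nat \<Rightarrow> 'a::field \<Rightarrow> 'a" where
  "tr m x = (\<Sum>i<m. x ^ (2 ^ i))"

definition subF :: "nat \<Rightarrow> 'a::field set" where
  "subF k = {x. x ^ (2 ^ k) = x}"

definition walsh :: "nat \<Rightarrow> ('a::{field,finite} \<Rightarrow> 'a) \<Rightarrow> 'a \<Rightarrow> int" where
  "walsh n f a = (\<Sum>x\<in>UNIV. (if f x + tr n (a * x) = 0 then 1 else -1))"

definition plateaued :: "nat \<Rightarrow> ('a::{field,finite} \<Rightarrow> 'a) \<Rightarrow> bool" where
  "plateaued n f \<longleftrightarrow> (\<exists>s::nat. n \<le> 2 * s \<and> s \<le> n \<and>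
      (\<forall>a. walsh n f a \<in> {0, 2 ^ s, - (2 ^ s)}))"

definition bweight :: "nat \<Rightarrow> nat" where
  "bweight j = card {i. bit j i}"

definition alg_deg_le :: "('a::{field,finite} \<Rightarrow> 'a) \<Rightarrow> nat \<Rightarrow> bool" where
  "alg_deg_le f d \<longleftrightarrow> (\<exists>c::nat \<Rightarrow> 'a.
      (\<forall>x. f x = (\<Sum>j<card (UNIV :: 'a set). c j * x ^ j)) \<and>
      (\<forall>j<card (UNIV :: 'a set). c j \<noteq> 0 \<longrightarrow> bweight j \<le> d))"

text \<open>A reduced polynomial over F_2 in X_0,...,X_{k-1} is given by its set of monomials,
  each monomial being a subset of {0..<k}; evaluation at y.\<close>
definition eval_reduced :: "nat set set \<Rightarrow> (nat \<Rightarrow> 'a::field) \<Rightarrow> 'a" where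
  "eval_reduced P y = (\<Sum>S\<in>P. \<Prod>j\<in>S. y j)"

definition Gfun :: "nat \<Rightarrow> nat \<Rightarrow> 'a::field \<Rightarrow> 'a" where
  "Gfun k r x = (\<Sum>i\<in>{1..2^r - 1}. x ^ ((i * 2^(k - r) + 1) * (2^k - 1) + 1))"

definition vcomb :: "nat \<Rightarrow> (nat \<Rightarrow> bool) \<Rightarrow> (nat \<Rightarrow> 'a \<Rightarrow> 'a::field) \<Rightarrow> 'a \<Rightarrow> 'a" where
  "vcomb t v f x = (\<Sum>i<t. if v i then f i x else 0)"

definition Hcomp :: "nat \<Rightarrow> ('a \<Rightarrow> 'a::field) \<Rightarrow> nat \<Rightarrow> (nat \<Rightarrow> 'a \<Rightarrow> 'a)
    \<Rightarrow> 'a \<Rightarrow> (nat \<Rightarrow> bool) \<Rightarrow> 'a \<Rightarrow> 'a" where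
  "Hcomp k G t f lam v x = tr k (lam * G x) + vcomb t v f x"

definition H_vplateaued :: "nat \<Rightarrow> nat \<Rightarrow> ('a \<Rightarrow> 'a::{field,finite}) \<Rightarrow> nat
    \<Rightarrow> (nat \<Rightarrow> 'a \<Rightarrow> 'a) \<Rightarrow> bool" where
  "H_vplateaued n k G t f \<longleftrightarrow> (\<forall>lam\<in>subF k. \<forall>v. (lam \<noteq> 0 \<or> (\<exists>i<t. v i)) \<longrightarrow>
      plateaued n (Hcomp k G t f lam v))"

definition H_quadratic :: "nat \<Rightarrow> ('a \<Rightarrow> 'a::{field,finite}) \<Rightarrow> nat
    \<Rightarrow> (nat \<Rightarrow> 'a \<Rightarrow> 'a) \<Rightarrow> bool" where
  "H_quadratic k G t f \<longleftrightarrow> (\<forall>lam\<in>subF k. \<forall>v. alg_deg_le (Hcomp k G t f lam v) 2)"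

definition F_vplateaued :: "nat \<Rightarrow> nat \<Rightarrow> (nat \<Rightarrow> 'a \<Rightarrow> 'a::{field,finite}) \<Rightarrow> bool" where
  "F_vplateaued n t f \<longleftrightarrow> (\<forall>v. (\<exists>i<t. v i) \<longrightarrow> plateaued n (vcomb t v f))"

end

theory Submission imports Defs "HOL-Computational_Algebra.Polynomial" begin

lemma bit_set_finite: "finite {i. bit (j::nat) i}"
proof -
  have "{i. bit j i} \<subseteq> {..<j}"
  proof
    fix i assume "i \<in> {i. bit j i}"
    then have b: "bit j i" by simp
    show "i \<in> {..<j}"
    proof (rule ccontr)
      assume "i \<notin> {..<j}"
      then have "j \<le> i" by simp
      then have "j < 2^i" using less_exp[of i] by linarith
      then have "j div 2^i = 0" by simp
      then show False using b by (simp add: bit_iff_odd)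
    qed
  qed
  then show ?thesis by (rule finite_subset) simp
qed

lemma bweight_rec: "bweight j = (if odd j then 1 else 0) + bweight (j div 2)"
proof -
  have e: "{i. bit j i} = (if odd j then {0} else {}) \<union> Suc ` {i. bit (j div 2) i}"
  proof (rule set_eqI)
    fix i show "i \<in> {i. bit j i} \<longleftrightarrow> i \<in> (if odd j then {0} else {}) \<union> Suc ` {i. bit (j div 2) i}"
      by (cases i) (auto simp: bit_0 bit_Suc)
  qed
  have "card ((if odd j then {0} else {}) \<union> Suc ` {i. bit (j div 2) i})
      = card (if odd j then {0::nat} else {}) + card (Suc ` {i. bit (j div 2) i})"
    by (rule card_Un_disjoint) (auto intro: bit_set_finite)
  also have "card (Suc ` {i. bit (j div 2) i}) = bweight (j div 2)"
    by (simp add: card_image bweight_def)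
  finally show ?thesis by (simp add: bweight_def e)
qed

lemma bw0: "bweight m = 0 \<Longrightarrow> m = 0"
proof (induction m rule: less_induct)
  case (less m)
  show ?case
  proof (rule ccontr)
    assume m: "m \<noteq> 0"
    have "even m" using less.prems bweight_rec[of m] by (auto split: if_splits)
    then have "bweight (m div 2) = 0" using less.prems bweight_rec[of m] by simp
    then have "m div 2 = 0" using less.IH m by simp
    then show False using m \<open>even m\<close> by auto
  qed
qed

lemma bw1: "bweight m \<le> 1 \<Longrightarrow> m = 0 \<or> (\<exists>a. m = 2^a)"
proof (induction m rule: less_induct)
  case (less m)
  show ?case
  proof (cases "m = 0")
    case True then show ?thesis by simp
  next
    case m: False
    show ?thesis
    proof (cases "odd m")
      case True
      then have "bweight (m div 2) = 0" using less.prems bweight_rec[of m] by simp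
      then have "m div 2 = 0" by (rule bw0)
      then have "m = 2^0" using True odd_two_times_div_two_succ[of m] by simp
      then show ?thesis by blast
    next
      case False
      then have "bweight (m div 2) \<le> 1" using less.prems bweight_rec[of m] by simp
      moreover have "m div 2 < m" using m by simp
      ultimately have "m div 2 = 0 \<or> (\<exists>a. m div 2 = 2^a)" using less.IH by blast
      then show ?thesis
      proof
        assume "m div 2 = 0" then show ?thesis using False m by presburger
      next
        assume "\<exists>a. m div 2 = 2^a"
        then obtain a where "m div 2 = 2^a" by blast
        then have "m = 2^(Suc a)" using False by (metis dvd_mult_div_cancel power_Suc)
        then show ?thesis by blast
      qed
    qed
  qed
qed

lemma bw2: "bweight m \<le> 2 \<Longrightarrow> m = 0 \<or> (\<exists>a. m = 2^a) \<or> (\<exists>a b. m = 2^a + 2^b)"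
proof (induction m rule: less_induct)
  case (less m)
  show ?case
  proof (cases "m = 0")
    case True then show ?thesis by simp
  next
    case m: False
    show ?thesis
    proof (cases "odd m")
      case True
      then have "bweight (m div 2) \<le> 1" using less.prems bweight_rec[of m] by simp
      then have "m div 2 = 0 \<or> (\<exists>a. m div 2 = 2^a)" by (rule bw1)
      then show ?thesis
      proof
        assume "m div 2 = 0" then have "m = 2^0" using True odd_two_times_div_two_succ[of m] by simp
        then show ?thesis by blast
      next
        assume "\<exists>a. m div 2 = 2^a"
        then obtain a where "m div 2 = 2^a" by blast
        then have "m = 2^(Suc a) + 2^0" using True by (metis odd_two_times_div_two_succ power_Suc power_0)
        then show ?thesis by blast
      qed
    next
      case False
      then have "bweight (m div 2) \<le> 2" using less.prems bweight_rec[of m] by simp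
      moreover have "m div 2 < m" using m by simp
      ultimately have h: "m div 2 = 0 \<or> (\<exists>a. m div 2 = 2^a) \<or> (\<exists>a b. m div 2 = 2^a + 2^b)"
        using less.IH by blast
      have m2: "m = 2 * (m div 2)" using False by simp
      from h show ?thesis
      proof (elim disjE exE)
        assume "m div 2 = 0" then show ?thesis using m2 by simp
      next
        fix a assume "m div 2 = 2^a"
        then have "m = 2^(Suc a)" using m2 by simp
        then show ?thesis by blast
      next
        fix a b assume "m div 2 = 2^a + 2^b"
        then have "m = 2^(Suc a) + 2^(Suc b)" using m2 by simp
        then show ?thesis by blast
      qed
    qed
  qed
qed

lemma ring_id2:
  fixes X1 X2 A1 A2 B1 B2 :: "'a::comm_ring_1"
  shows "(X1 + A1 + B1) * (X2 + A2 + B2) + X1*X2 + (A1 + B1) * (A2 + B2)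
      = ((X1 + A1) * (X2 + A2) + X1*X2 + A1*A2) + ((X1 + B1) * (X2 + B2) + X1*X2 + B1*B2)
        + 2 * (A1*B2 + B1*A2 - X1*X2)"
  by (simp add: algebra_simps)

lemma sq_pow2_even: "(w::int)^2 = 2^m \<Longrightarrow> even m"
proof (induction m arbitrary: w rule: less_induct)
  case (less m)
  show ?case
  proof (cases "m < 2")
    case True
    show ?thesis
    proof (cases "m = 1")
      case True
      then have w2: "w^2 = 2" using less.prems by simp
      have sq: "w^2 = \<bar>w\<bar> * \<bar>w\<bar>" by (simp add: power2_eq_square)
      show ?thesis
      proof (cases "\<bar>w\<bar> \<le> 1")
        case True
        then have "\<bar>w\<bar> = 0 \<or> \<bar>w\<bar> = 1" by auto
        then have "w = 0 \<or> w = 1 \<or> w = -1" by auto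
        then show ?thesis using w2 by (auto simp: power2_eq_square)
      next
        case False
        then have "2 \<le> \<bar>w\<bar>" by simp
        then have "2 * 2 \<le> \<bar>w\<bar> * \<bar>w\<bar>" by (intro mult_mono) auto
        then show ?thesis using w2 by (simp add: power2_eq_square)
      qed
    next
      case False then show ?thesis using \<open>m < 2\<close> by (cases m) auto
    qed
  next
    case False
    then obtain m' where m': "m = Suc (Suc m')" by (metis add_2_eq_Suc le_Suc_ex not_less)
    have "even (w^2)" using less.prems m' by simp
    then have "even w" by simp
    then obtain v where v: "w = 2 * v" by blast
    have "4 * v^2 = 4 * 2^m'" using less.prems m' v by (simp add: power_mult_distrib)
    then have "v^2 = 2^m'" by simp
    then have "even m'" using less.IH[of m'] m' by simp
    then show ?thesis using m' by simp
  qed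
qed

lemma sum4_eq0: "(a::'a::ab_group_add) + b + c + d = 0 \<Longrightarrow> a = -(b + c + d)"
proof -
  assume h: "a + b + c + d = 0"
  have "a + (b + c + d) = 0" using h by (simp only: add.assoc)
  then show ?thesis by (simp only: eq_neg_iff_add_eq_0)
qed

locale ff =
  fixes n k :: nat and TY :: "'a::{field,finite} itself"
  assumes cardL: "card (UNIV::'a set) = 2^n" and nk: "n = 2*k" and kpos: "0<k"
begin

lemma npos: "0 < n" using nk kpos by simp

lemma fermat1: assumes "(x::'a) \<noteq> 0" shows "x ^ (2^n - 1) = 1"
proof -
  let ?A = "UNIV - {0::'a}"
  have inj: "inj_on ((*) x) ?A" using assms by (auto simp: inj_on_def)
  have img: "(*) x ` ?A = ?A"
  proof
    show "(*) x ` ?A \<subseteq> ?A" using assms by auto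
    show "?A \<subseteq> (*) x ` ?A"
    proof
      fix y assume "y \<in> ?A"
      then have "y = x * (y / x)" "y / x \<in> ?A" using assms by auto
      then show "y \<in> (*) x ` ?A" by blast
    qed
  qed
  have "(\<Prod>y\<in>?A. x * y) = (\<Prod>y\<in>?A. y)"
    using prod.reindex[OF inj, of id] img by simp
  moreover have "(\<Prod>y\<in>?A. x * y) = x ^ card ?A * (\<Prod>y\<in>?A. y)"
    by (simp add: prod.distrib)
  moreover have "(\<Prod>y\<in>?A. y) \<noteq> 0" by simp
  moreover have "card ?A = 2^n - 1" using cardL by (simp add: card_Diff_singleton)
  ultimately show ?thesis by simp
qed

lemma fermat: "(x::'a) ^ (2^n) = x"
proof (cases "x = 0")
  case True then show ?thesis using npos by simp
next
  case False
  have "x ^ (2^n) = x ^ (2^n - 1) * x"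
    by (metis One_nat_def Suc_pred mult.commute pos2 power_Suc zero_less_power)
  then show ?thesis using fermat1[OF False] by simp
qed

lemma char2: "(1::'a) + 1 = 0"
proof -
  have "((-1)::'a) ^ (2^n) = -1" by (rule fermat)
  moreover have "even ((2::nat)^n)" using npos by simp
  ultimately have "(1::'a) = -1" by simp
  then show ?thesis by (metis add.right_inverse)
qed

lemma add_self[simp]: "(x::'a) + x = 0"
proof -
  have "x + x = x * (1 + 1)" by (simp add: algebra_simps)
  then show ?thesis using char2 by simp
qed

lemma two0[simp]: "(2::'a) = 0"
  using char2 by (metis one_add_one)

lemma minus_id[simp]: "- (x::'a) = x"
  using add_self[of x] by (metis add_eq_0_iff)

lemma diff_is_add[simp]: "(x::'a) - y = x + y"
  by (metis diff_conv_add_uminus minus_id)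

lemma add_cancel2[simp]: "(x::'a) + (x + a) = a"
  by (simp only: add.assoc[symmetric] add_self add_0_left)

lemma add_eq0_iff: "(x::'a) + y = 0 \<longleftrightarrow> x = y"
  by (metis add_self add.left_cancel)

lemma sq_add: "((x::'a) + y)^2 = x^2 + y^2"
proof -
  have "(x+y)^2 = x^2 + y^2 + (x*y + x*y)" by (simp add: power2_eq_square algebra_simps)
  then show ?thesis by (simp only: add_self add_0_right)
qed

lemma frob_add: "((x::'a) + y)^(2^m) = x^(2^m) + y^(2^m)"
proof (induction m)
  case 0 then show ?case by simp
next
  case (Suc m)
  have "(x+y)^(2^Suc m) = ((x+y)^(2^m))^2" by (simp add: power_mult[symmetric] mult.commute)
  also have "\<dots> = (x^(2^m))^2 + (y^(2^m))^2" using Suc sq_add by simp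
  also have "\<dots> = x^(2^Suc m) + y^(2^Suc m)" by (simp add: power_mult[symmetric] mult.commute)
  finally show ?case .
qed

lemma frob_sum: "(\<Sum>i\<in>A. (f i::'a))^(2^m) = (\<Sum>i\<in>A. (f i)^(2^m))"
  by (induction A rule: infinite_finite_induct) (auto simp: frob_add)

lemma frob_inj: "(x::'a)^(2^m) = y^(2^m) \<Longrightarrow> x = y"
  by (metis add_eq0_iff frob_add power_eq_0_iff)

lemma pow_pow2: "((x::'a)^(2^a))^(2^b) = x^(2^(a+b))"
  by (simp add: power_mult[symmetric] power_add)

lemma frob_mult: "((x::'a) * y)^m = x^m * y^m" by (simp add: power_mult_distrib)

lemma pow_2k_twice: "((x::'a)^(2^k))^(2^k) = x"
  using fermat[of x] by (simp add: pow_pow2 nk mult_2)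

definition T :: "'a \<Rightarrow> 'a" where "T x = x + x^(2^k)"

lemma inK: "(x::'a) \<in> subF k \<longleftrightarrow> x^(2^k) = x" by (simp add: subF_def)

lemma T_in_K: "T x \<in> subF k"
  by (simp add: inK T_def frob_add pow_2k_twice add.commute)

lemma K_0[simp]: "(0::'a) \<in> subF k" by (simp add: inK)
lemma K_1[simp]: "(1::'a) \<in> subF k" by (simp add: inK)
lemma K_add: "x \<in> subF k \<Longrightarrow> y \<in> subF k \<Longrightarrow> (x::'a) + y \<in> subF k"
  by (simp add: inK frob_add)
lemma K_mult: "x \<in> subF k \<Longrightarrow> y \<in> subF k \<Longrightarrow> (x::'a) * y \<in> subF k"
  by (simp add: inK power_mult_distrib)
lemma K_inv: "x \<in> subF k \<Longrightarrow> inverse (x::'a) \<in> subF k"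
  by (simp add: inK power_inverse)
lemma K_div: "x \<in> subF k \<Longrightarrow> y \<in> subF k \<Longrightarrow> (x::'a) / y \<in> subF k"
  by (simp add: inK power_divide)
lemma K_pow: "x \<in> subF k \<Longrightarrow> (x::'a) ^ m \<in> subF k"
proof -
  assume "x \<in> subF k"
  then have "x^(2^k) = x" by (simp add: inK)
  then have "(x^m)^(2^k) = x^m" by (metis power_mult mult.commute)
  then show ?thesis by (simp add: inK)
qed
lemma K_sum: "(\<And>i. i \<in> A \<Longrightarrow> f i \<in> subF k) \<Longrightarrow> (\<Sum>i\<in>A. (f i::'a)) \<in> subF k"
  by (induction A rule: infinite_finite_induct) (auto intro: K_add)

lemma T_add: "T (x + y) = T x + T y"
  by (simp add: T_def frob_add algebra_simps)
lemma T_mult_K: "c \<in> subF k \<Longrightarrow> T (c * x) = c * T x"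
  by (simp add: T_def inK power_mult_distrib algebra_simps)
lemma T_zero_iff: "T x = 0 \<longleftrightarrow> x \<in> subF k"
  by (auto simp: T_def inK add_eq0_iff)
lemma T_K: "x \<in> subF k \<Longrightarrow> T x = 0" by (simp add: T_zero_iff)
lemma T_eq_iff: "T x = T y \<longleftrightarrow> x + y \<in> subF k"
  by (metis T_add T_zero_iff add_eq0_iff)

lemma tr_add: "tr m ((x::'a) + y) = tr m x + tr m y"
  by (simp add: tr_def frob_add sum.distrib)
lemma tr_0[simp]: "tr m (0::'a) = 0" unfolding tr_def by (rule sum.neutral) simp

lemma sum_split_add: "(\<Sum>i<a+b. f i) = (\<Sum>i<a. f i) + (\<Sum>i<(b::nat). (f (a+i)::'a))"
  by (induction b) (simp_all add: add.assoc)

lemma tr_n: "tr n (z::'a) = tr k (T z)"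
proof -
  have "tr n z = (\<Sum>i<k. z^(2^i)) + (\<Sum>i<k. z^(2^(k+i)))"
    unfolding tr_def nk mult_2 by (rule sum_split_add)
  also have "(\<Sum>i<k. z^(2^(k+i))) = tr k (z^(2^k))"
    by (simp add: tr_def pow_pow2)
  also have "(\<Sum>i<k. z^(2^i)) + tr k (z^(2^k)) = tr k (T z)" by (simp add: T_def tr_def frob_add sum.distrib)
  finally show ?thesis by (simp add: tr_def)
qed

lemma tr_sq_K: assumes "z \<in> subF k" shows "tr k ((z::'a)^2) = tr k z"
proof -
  have "tr k (z^2) = (\<Sum>i<k. z^(2^(Suc i)))"
    unfolding tr_def by (simp add: power_mult[symmetric] mult.commute)
  moreover have "(\<Sum>i<Suc k. z^(2^i)) = z^(2^0) + (\<Sum>i<k. z^(2^(Suc i)))"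
    by (rule sum.lessThan_Suc_shift)
  moreover have "(\<Sum>i<Suc k. z^(2^i)) = (\<Sum>i<k. z^(2^i)) + z^(2^k)" by simp
  ultimately show ?thesis using assms by (simp add: tr_def inK)
qed

lemma tr_frob_K: assumes "z \<in> subF k" shows "tr k ((z::'a)^(2^m)) = tr k z"
proof (induction m)
  case 0 then show ?case by simp
next
  case (Suc m)
  have "z^(2^Suc m) = (z^(2^m))^2" by (simp add: power_mult[symmetric] mult.commute)
  then show ?case using tr_sq_K[OF K_pow[OF assms, of "2^m"]] Suc by simp
qed

lemma tr_idem: assumes "z \<in> subF k" shows "(tr k (z::'a))^2 = tr k z"
proof -
  have "(tr k z)^2 = (\<Sum>i<k. (z^(2^i))^2)" using frob_sum[of "\<lambda>i. z^(2^i)" "{..<k}" 1] by (simp add: tr_def)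
  also have "\<dots> = tr k (z^2)" by (simp add: tr_def power_mult[symmetric] mult.commute)
  finally show ?thesis using tr_sq_K[OF assms] by simp
qed

lemma tr_n_idem: "(tr n (z::'a))^2 = tr n z"
  using tr_idem[OF T_in_K] by (simp add: tr_n)

lemma idem_cases: "(x::'a)^2 = x \<longleftrightarrow> x = 0 \<or> x = 1"
proof -
  have e: "x * (x + 1) = x^2 + x" by (simp add: power2_eq_square algebra_simps)
  have "x^2 = x \<longleftrightarrow> x^2 + x = 0" by (simp add: add_eq0_iff)
  also have "\<dots> \<longleftrightarrow> x = 0 \<or> x + 1 = 0" by (metis e mult_eq_0_iff)
  finally show ?thesis by (simp add: add_eq0_iff)
qed

lemma idem_add: "(x::'a)^2 = x \<Longrightarrow> y^2 = y \<Longrightarrow> (x+y)^2 = x+y"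
  by (simp add: sq_add)
lemma idem_mult: "(x::'a)^2 = x \<Longrightarrow> y^2 = y \<Longrightarrow> (x*y)^2 = x*y"
  by (simp add: power_mult_distrib)
lemma idem_sum: "(\<And>i. i \<in> A \<Longrightarrow> (f i)^2 = f i) \<Longrightarrow> (\<Sum>i\<in>A. (f i::'a))^2 = (\<Sum>i\<in>A. f i)"
  by (induction A rule: infinite_finite_induct) (auto intro: idem_add)
lemma idem_prod: "(\<And>i. i \<in> A \<Longrightarrow> (f i)^2 = f i) \<Longrightarrow> (\<Prod>i\<in>A. (f i::'a))^2 = (\<Prod>i\<in>A. f i)"
  by (induction A rule: infinite_finite_induct) (auto intro: idem_mult)

definition chi :: "'a \<Rightarrow> int" where "chi z = (if z = 0 then 1 else -1)"

lemma chi_add: "(x::'a)^2 = x \<Longrightarrow> y^2 = y \<Longrightarrow> chi (x+y) = chi x * chi y"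
  by (auto simp: idem_cases chi_def)

lemma chi_one_add: "(x::'a)^2 = x \<Longrightarrow> chi (x+1) = - chi x"
  by (auto simp: idem_cases chi_def)

lemma walsh_chi: "walsh n f a = (\<Sum>x\<in>UNIV. chi (f x + tr n (a * x)))"
  by (simp add: walsh_def chi_def)

lemma char_sum:
  assumes Aadd: "\<And>x y. x \<in> A \<Longrightarrow> y \<in> A \<Longrightarrow> (x::'a) + y \<in> A"
    and padd: "\<And>x y. x \<in> A \<Longrightarrow> y \<in> A \<Longrightarrow> \<psi> (x + y) = \<psi> x + \<psi> y"
    and pidem: "\<And>x. x \<in> A \<Longrightarrow> (\<psi> x)^2 = (\<psi> x::'a)"
  shows "(\<Sum>x\<in>A. chi (\<psi> x)) = (if \<forall>x\<in>A. \<psi> x = 0 then int (card A) else 0)"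
proof (cases "\<forall>x\<in>A. \<psi> x = 0")
  case True then show ?thesis by (simp add: chi_def)
next
  case False
  then obtain x0 where x0: "x0 \<in> A" "\<psi> x0 \<noteq> 0" by blast
  then have p1: "\<psi> x0 = 1" using pidem idem_cases by blast
  have bij: "bij_betw (\<lambda>x. x + x0) A A"
    by (rule bij_betw_byWitness[where f'="\<lambda>x. x + x0"]) (auto simp: add.assoc x0 Aadd)
  have "(\<Sum>x\<in>A. chi (\<psi> x)) = (\<Sum>x\<in>A. chi (\<psi> (x + x0)))"
    using sum.reindex_bij_betw[OF bij, of "\<lambda>x. chi (\<psi> x)"] by simp
  also have "\<dots> = (\<Sum>x\<in>A. - chi (\<psi> x))"
    by (rule sum.cong) (auto simp: padd x0 p1 chi_one_add pidem)
  finally have "(\<Sum>x\<in>A. chi (\<psi> x)) = 0" by (simp add: sum_negf)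
  then show ?thesis using False by (subst if_not_P[OF False]) simp
qed

lemma poly_nonroot:
  fixes p :: "'a poly"
  assumes "p \<noteq> 0" "degree p < card S"
  shows "\<exists>x\<in>S. poly p x \<noteq> 0"
proof (rule ccontr)
  assume "\<not> ?thesis"
  then have "S \<subseteq> {x. poly p x = 0}" by auto
  then have "card S \<le> card {x. poly p x = 0}" by (intro card_mono) auto
  also have "\<dots> \<le> degree p" by (rule card_poly_roots_bound[OF assms(1)])
  finally show False using assms(2) by simp
qed

lemma binom_nonroot:
  assumes "d2 < d1" "d1 < card S"
  shows "\<exists>x\<in>S. (x::'a)^d1 \<noteq> x^d2"
proof -
  let ?p = "monom (1::'a) d1 - monom 1 d2"
  have "coeff ?p d1 = 1" using assms by simp
  then have "?p \<noteq> 0" by (metis coeff_0 one_neq_zero)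
  moreover have "degree ?p \<le> d1" using assms(1)
    by (intro degree_diff_le degree_monom_le) (meson degree_monom_le le_less_trans less_imp_le)
  ultimately obtain x where "x \<in> S" "poly ?p x \<noteq> 0"
    using poly_nonroot[of ?p S] assms by force
  then show ?thesis by (auto simp: poly_monom add_eq0_iff)
qed

lemma card_K_le: "card (subF k :: 'a set) \<le> 2^k"
proof (rule ccontr)
  assume "\<not> ?thesis"
  then obtain x where "x \<in> (subF k :: 'a set)" "x^(2^k) \<noteq> x^1"
    using binom_nonroot[of 1 "2^k" "subF k :: 'a set"] kpos
    by (metis One_nat_def not_le one_less_numeral_iff one_less_power semiring_norm(76))
  then show False by (simp add: inK)
qed

lemma card_K: "card (subF k :: 'a set) = 2^k" and range_T: "range T = (subF k :: 'a set)"
proof -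
  let ?K = "subF k :: 'a set"
  define C where "C = (\<lambda>c. T -` {c}) ` range T"
  have fibre: "card (T -` {c}) = card ?K" if cR: "c \<in> range T" for c
  proof -
    obtain x0 where x0: "T x0 = c" using cR by blast
    have "bij_betw (\<lambda>s. x0 + s) ?K (T -` {c})"
    proof (rule bij_betw_byWitness[where f'="\<lambda>y. x0 + y"])
      show "\<forall>a\<in>?K. x0 + (x0 + a) = a" by (simp add: add.assoc[symmetric])
      show "\<forall>a\<in>T -` {c}. x0 + (x0 + a) = a" by (simp add: add.assoc[symmetric])
      show "(+) x0 ` ?K \<subseteq> T -` {c}"
      proof
        fix z assume "z \<in> (+) x0 ` ?K"
        then obtain s where "s \<in> ?K" "z = x0 + s" by blast
        then show "z \<in> T -` {c}" using x0 by (simp add: T_add T_K)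
      qed
      show "(+) x0 ` (T -` {c}) \<subseteq> ?K"
      proof
        fix z assume "z \<in> (+) x0 ` (T -` {c})"
        then obtain s where "T s = c" "z = x0 + s" by blast
        then show "z \<in> ?K" using x0 T_eq_iff by metis
      qed
    qed
    then have "card ?K = card (T -` {c})" by (rule bij_betw_same_card)
    then show ?thesis by simp
  qed
  have "card ?K * card C = card (\<Union>C)"
    by (rule card_partition) (auto simp: C_def fibre)
  moreover have "\<Union>C = UNIV" by (auto simp: C_def)
  ultimately have eq: "card ?K * card C = 2^n" using cardL by simp
  have "card C \<le> card (range T)" unfolding C_def by (rule card_image_le) simp
  also have rT: "card (range T) \<le> card ?K" by (rule card_mono) (auto simp: T_in_K)
  finally have cC: "card C \<le> card ?K" .
  have e2: "(2::nat)^n = 2^k * 2^k" by (simp add: nk mult_2 power_add)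
  have "card ?K * card C \<le> card ?K * card ?K" using cC by (rule mult_le_mono2)
  then have "(2::nat)^k * 2^k \<le> card ?K * card ?K" using eq e2 by simp
  then have "2^k \<le> card ?K"
  proof (rule contrapos_pp)
    assume "\<not> 2^k \<le> card ?K"
    then have "card ?K * card ?K < 2^k * 2^k" by (intro mult_strict_mono) auto
    then show "\<not> 2^k * 2^k \<le> card ?K * card ?K" by simp
  qed
  then show cK: "card ?K = 2^k" using card_K_le by simp
  then have "card C = 2^k" using eq e2 by simp
  then have "card (range T) = card ?K" using rT \<open>card C \<le> card (range T)\<close> cK by simp
  then show "range T = ?K" by (intro card_subset_eq) (auto simp: T_in_K)
qed

lemma tr_nondeg:
  assumes "w \<in> subF k" "w \<noteq> 0"
  shows "\<exists>s\<in>subF k. tr k (s * w) \<noteq> (0::'a)"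
proof -
  define p where "p = (\<Sum>i<k. monom (w^(2^i)) (2^i))"
  have "coeff p (2^(k-1)) = (\<Sum>i<k. if i = k - 1 then w^(2^i) else 0)"
    unfolding p_def coeff_sum by (intro sum.cong) auto
  also have "\<dots> = w^(2^(k-1))" using kpos by simp
  finally have "coeff p (2^(k-1)) \<noteq> 0" using assms by simp
  then have "p \<noteq> 0" by (metis coeff_0)
  moreover have "degree p \<le> 2^(k-1)" unfolding p_def
  proof (intro degree_sum_le)
    fix i assume "i \<in> {..<k}"
    then have "(2::nat)^i \<le> 2^(k-1)" by (intro power_increasing) auto
    then show "degree (monom (w^(2^i)) (2^i)) \<le> 2^(k-1)" using degree_monom_le order_trans by blast
  qed simp
  moreover have "(2::nat)^(k-1) < 2^k" using kpos by simp
  ultimately have "p \<noteq> 0 \<and> degree p < card (subF k :: 'a set)" using card_K by linarith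
  then obtain s where "s \<in> subF k" "poly p s \<noteq> 0"
    using poly_nonroot[of p "subF k"] by blast
  moreover have "poly p s = tr k (s * w)"
    by (simp add: p_def poly_sum poly_monom tr_def power_mult_distrib mult.commute)
  ultimately show ?thesis by auto
qed

lemma char_sum_K:
  assumes "w \<in> subF k"
  shows "(\<Sum>s\<in>subF k. chi (tr k (s * w))) = (if w = (0::'a) then 2^k else 0)"
proof -
  have "(\<Sum>s\<in>subF k. chi (tr k (s * w))) =
     (if \<forall>s\<in>subF k. tr k (s * w) = 0 then int (card (subF k :: 'a set)) else 0)"
    by (rule char_sum) (auto simp: K_add distrib_right tr_add intro!: tr_idem K_mult assms)
  then show ?thesis using tr_nondeg[OF assms] card_K by auto
qed

lemma of_nat_char2: "(of_nat m :: 'a) = (if even m then 0 else 1)"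
proof (induction m)
  case 0 then show ?case by simp
next
  case (Suc m) then show ?case by (auto simp: char2)
qed

lemma K_pow_e: assumes "c \<in> subF k" shows "(c::'a)^(m*(2^k-1)+1) = c"
proof (cases "c = 0")
  case True then show ?thesis by simp
next
  case False
  have "c^(2^k-1) * c = c^(2^k)" by (metis power_Suc2 Suc_pred' pos2 zero_less_power One_nat_def)
  then have "c^(2^k-1) * c = c" using assms by (simp add: inK)
  then have "c^(2^k-1) = 1" using False by simp
  have "c^(m*(2^k-1)+1) = (c^(2^k-1))^m * c"
    by (metis power_add power_mult mult.commute power_one_right)
  then show ?thesis using \<open>c^(2^k-1) = 1\<close> by simp
qed

lemma G_mult_K: assumes "c \<in> subF k" shows "Gfun k r (c * x) = c * Gfun k r (x::'a)"
  unfolding Gfun_def sum_distrib_left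
  by (intro sum.cong refl) (simp only: power_mult_distrib K_pow_e[OF assms])

lemma G_0[simp]: "Gfun k r (0::'a) = 0"
  using G_mult_K[of 0 r 0] by simp

lemma G_K: assumes "x \<in> subF k" "1 \<le> r" shows "Gfun k r x = (x::'a)"
proof -
  have "Gfun k r x = Gfun k r (x * 1)" by simp
  also have "\<dots> = x * Gfun k r 1" by (rule G_mult_K[OF assms(1)])
  also have "Gfun k r (1::'a) = of_nat (card {1..2^r-1::nat})" by (simp add: Gfun_def)
  also have "\<dots> = 1" using assms(2)
    by (simp add: of_nat_char2)
  finally show ?thesis by simp
qed

lemma G_Y:
  assumes y: "(y::'a)^(2^k) = y + 1" and r: "1 \<le> r" "r < k"
  shows "Gfun k r y = y^(2^(k-r)) + y + 1"
proof -
  define q where "q = (2::nat)^(k-r)"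
  define m where "m = (2::nat)^r - 1"
  have y0: "y \<noteq> 0" using y by (metis add_0 power_0_left pos2 zero_less_power zero_neq_one less_numeral_extra(3))
  have y1: "y + 1 \<noteq> 0"
  proof
    assume "y + 1 = 0"
    then have "y = 1" by (simp add: add_eq0_iff)
    with y show False by simp
  qed
  define z where "z = (y+1)/y"
  have "y^(2^k-1) * y = y^(2^k)" by (metis power_Suc2 Suc_pred' pos2 zero_less_power One_nat_def)
  then have yz: "y^(2^k-1) = z" using y y0 by (simp add: z_def field_simps)
  define \<rho> where "\<rho> = z^q"
  have termi: "y^((i*q+1)*(2^k-1)+1) = \<rho>^i * (y+1)" for i
  proof -
    have "y^((i*q+1)*(2^k-1)+1) = (y^(2^k-1))^(i*q+1) * y"
      by (metis power_add power_mult mult.commute power_one_right)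
    also have "\<dots> = z^(i*q) * (z * y)" by (simp only: yz power_add power_one_right mult.assoc)
    also have "z * y = y + 1" using y0 by (simp add: z_def)
    also have "z^(i*q) = \<rho>^i" by (simp add: \<rho>_def power_mult[symmetric] mult.commute)
    finally show ?thesis .
  qed
  have G: "Gfun k r y = (y+1) * (\<Sum>i=1..m. \<rho>^i)"
    unfolding Gfun_def m_def q_def[symmetric] sum_distrib_left by (rule sum.cong[OF refl]) (simp only: termi mult.commute)
  have qr: "q * 2^r = 2^k" using r by (simp add: q_def power_add[symmetric])
  have zk: "z^(2^k) = y / (y+1)"
    using y by (simp add: z_def power_divide frob_add)
  have rho_r: "\<rho>^(2^r) = y / (y+1)"
    using zk by (simp add: \<rho>_def power_mult[symmetric] qr)
  have rho1: "1 - \<rho> = 1 / y^q"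
  proof -
    have "z = 1 + 1 / y" using y0 by (simp add: z_def field_simps)
    then have "\<rho> = 1 + (1/y)^q" unfolding \<rho>_def q_def by (simp add: frob_add)
    then show ?thesis by (simp add: power_one_over)
  qed
  have Sm: "Suc m = 2^r" by (simp add: m_def)
  define S where "S = (\<Sum>i=1..m. \<rho>^i)"
  have E: "(1 - \<rho>) * S = \<rho> + \<rho>^(2^r)"
  proof -
    have "1 < (2::nat)^r" using r by (intro one_less_power) auto
    then have "1 \<le> m" by (simp add: m_def)
    then show ?thesis using sum_gp_multiplied[of 1 m \<rho>] Sm by (simp add: S_def)
  qed
  have A: "S = y^q * ((1 - \<rho>) * S)"
    using y0 by (simp only: rho1) simp
  have r2: "1 + \<rho> = 1 / y^q" using rho1 by simp
  have "\<rho> = 1 + (1 + \<rho>)" by (simp add: add.assoc[symmetric])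
  then have rho_eq: "\<rho> = 1 + 1 / y^q" by (simp only: r2)
  from A have "S = y^q * (\<rho> + \<rho>^(2^r))" by (simp only: E)
  then have "S = y^q * (\<rho> + y/(y+1))" by (simp only: rho_r)
  then have S_eq: "S = y^q * (1 + 1 / y^q + y/(y+1))" by (simp only: rho_eq)
  have yq: "y^q \<noteq> 0" using y0 by simp
  have s1: "y^q * (1 + 1/y^q + y/(y+1)) = y^q + 1 + y^q*y/(y+1)" using yq by (simp add: distrib_left)
  have s2: "(y+1)*(y^q + 1 + y^q*y/(y+1)) = y^q*(y+1) + (y+1) + y^q*y" using y1 by (simp add: distrib_left mult.commute)
  have "(y+1) * S = y^q*(y+1) + (y+1) + y^q*y"
    using S_eq s1 s2 by simp
  also have "\<dots> = y^q + y + 1" by (simp add: algebra_simps)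
  finally have "(y+1) * S = y^q + y + 1" .
  then show ?thesis using G by (simp add: q_def S_def)
qed

lemma frob_fix_add: "(\<rho>::'a)^(2^a) = \<rho> \<Longrightarrow> \<rho>^(2^b) = \<rho> \<Longrightarrow> \<rho>^(2^(a+b)) = \<rho>"
  by (metis pow_pow2)

lemma frob_fix_mult: "(\<rho>::'a)^(2^a) = \<rho> \<Longrightarrow> \<rho>^(2^(j*a)) = \<rho>"
proof (induction j)
  case 0 then show ?case by simp
next
  case (Suc j) then show ?case using frob_fix_add[of \<rho> a "j*a"] by (simp add: add.commute)
qed

lemma frob_fix_cancel: "(\<rho>::'a)^(2^a) = \<rho> \<Longrightarrow> \<rho>^(2^(a+b)) = \<rho> \<Longrightarrow> \<rho>^(2^b) = \<rho>"
proof -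
  assume A: "\<rho>^(2^a) = \<rho>" and B: "\<rho>^(2^(a+b)) = \<rho>"
  have "(\<rho>^(2^b))^(2^a) = \<rho>^(2^a)" using B A by (simp add: pow_pow2 add.commute)
  then show ?thesis by (rule frob_inj)
qed

lemma frob_fix_gcd: "(\<rho>::'a)^(2^a) = \<rho> \<Longrightarrow> \<rho>^(2^b) = \<rho> \<Longrightarrow> \<rho>^(2^(gcd a b)) = \<rho>"
proof (induction a b rule: gcd_nat_induct)
  case (step m n)
  have "\<rho>^(2^((m div n)*n)) = \<rho>" by (rule frob_fix_mult[OF step(4)])
  moreover have "m = (m div n)*n + m mod n" by simp
  ultimately have "\<rho>^(2^(m mod n)) = \<rho>" using step(3) frob_fix_cancel by metis
  then have "\<rho>^(2^(gcd n (m mod n))) = \<rho>" using step by blast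
  then show ?case by (metis gcd_red_nat)
qed simp

lemma pow_inj_K:
  assumes "coprime r k" "t1 \<in> subF k" "t2 \<in> subF k" "t1 \<noteq> 0" "t2 \<noteq> 0"
    and eq: "(t1::'a)^(2^r-1) = t2^(2^r-1)"
  shows "t1 = t2"
proof -
  define \<rho> where "\<rho> = t1 / t2"
  have rK: "\<rho> \<in> subF k" using assms by (simp add: \<rho>_def K_div)
  have "\<rho>^(2^r-1) = 1" using eq assms by (simp add: \<rho>_def power_divide)
  then have "\<rho>^(2^r-1) * \<rho> = \<rho>" by simp
  then have r1: "\<rho>^(2^r) = \<rho>" by (metis power_Suc2 Suc_pred' pos2 zero_less_power One_nat_def)
  have r2: "\<rho>^(2^k) = \<rho>" using rK by (simp add: inK)
  have "\<rho>^(2^(gcd r k)) = \<rho>" by (rule frob_fix_gcd[OF r1 r2])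
  then have "\<rho>^2 = \<rho>" using assms(1) by simp
  then have "\<rho> = 0 \<or> \<rho> = 1" by (simp add: idem_cases)
  then show ?thesis using assms by (auto simp: \<rho>_def)
qed

lemma pow_surj_K:
  assumes "coprime r k" "c \<in> subF k" "c \<noteq> 0"
  shows "\<exists>t. t \<in> subF k \<and> t \<noteq> 0 \<and> (t::'a)^(2^r-1) = c"
proof -
  let ?A = "subF k - {0::'a}"
  have "inj_on (\<lambda>t. t^(2^r-1)) ?A" using pow_inj_K[OF assms(1)] by (auto simp: inj_on_def)
  moreover have "(\<lambda>t. t^(2^r-1)) ` ?A \<subseteq> ?A" by (auto simp: K_pow)
  ultimately have "(\<lambda>t. t^(2^r-1)) ` ?A = ?A" by (intro endo_inj_surj) auto
  then have "c \<in> (\<lambda>t. t^(2^r-1)) ` ?A" using assms by auto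
  then show ?thesis by auto
qed

lemma GY_in_K: assumes "(y::'a)^(2^k) = y + 1" "r \<le> k" shows "y^(2^(k-r)) + y + 1 \<in> subF k"
proof -
  have "(y^(2^(k-r)))^(2^k) = (y^(2^k))^(2^(k-r))" by (simp add: pow_pow2 add.commute)
  then show ?thesis using assms by (simp add: inK frob_add)
qed

lemma Y_pow: "T y = 1 \<Longrightarrow> (y::'a)^(2^k) = y + 1"
proof -
  assume "T y = 1"
  then have e: "y + y^(2^k) = 1" by (simp add: T_def)
  have "y^(2^k) = y + (y + y^(2^k))" by (simp add: add.assoc[symmetric])
  also have "\<dots> = y + 1" by (simp only: e)
  finally show ?thesis .
qed

lemma bij_decomp:
  assumes y0: "T y0 = 1"
  shows "bij_betw (\<lambda>(t,s). t * (y0 + s)) ((subF k - {0}) \<times> subF k) (- subF k :: 'a set)"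
proof (rule bij_betw_byWitness[where f'="\<lambda>x. (T x, x / T x + y0)"])
  show "\<forall>p\<in>(subF k - {0}) \<times> subF k. (\<lambda>x. (T x, x / T x + y0)) ((\<lambda>(t,s). t * (y0 + s)) p) = p"
  proof
    fix p :: "'a \<times> 'a" assume "p \<in> (subF k - {0::'a}) \<times> subF k"
    then obtain t s where p: "p = (t,s)" "t \<in> subF k" "t \<noteq> 0" "s \<in> subF k" by auto
    have "T (t * (y0 + s)) = t" using p y0 by (simp add: T_mult_K T_add T_K)
    moreover have "t * (y0 + s) / t + y0 = s"
    proof -
      have "t * (y0 + s) / t = y0 + s" using p by simp
      moreover have "y0 + s + y0 = s" by (simp add: add.commute[of y0 s] add.assoc)
      ultimately show ?thesis by simp
    qed
    ultimately show "(\<lambda>x. (T x, x / T x + y0)) ((\<lambda>(t,s). t * (y0 + s)) p) = p" using p by simp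
  qed
  show "\<forall>x\<in>- subF k. (\<lambda>(t,s). t * (y0 + s)) ((\<lambda>x. (T x, x / T x + y0)) x) = x"
  proof
    fix x :: 'a assume "x \<in> - subF k"
    then have "T x \<noteq> 0" by (simp add: T_zero_iff)
    moreover have "y0 + (x / T x + y0) = x / T x" by (simp add: add.commute[of y0] add.assoc)
    ultimately show "(\<lambda>(t,s). t * (y0 + s)) ((\<lambda>x. (T x, x / T x + y0)) x) = x"
      by simp
  qed
  show "(\<lambda>(t,s). t * (y0 + s)) ` ((subF k - {0}) \<times> subF k) \<subseteq> - subF k"
  proof
    fix x assume "x \<in> (\<lambda>(t,s). t * (y0 + s)) ` ((subF k - {0::'a}) \<times> (subF k :: 'a set))"
    then obtain t s where p: "x = t * (y0 + s)" "t \<in> subF k" "t \<noteq> 0" "s \<in> subF k" by auto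
    have "T x = t" using p y0 by (simp add: T_mult_K T_add T_K)
    then show "x \<in> - subF k" using p T_zero_iff by (metis ComplI)
  qed
  show "(\<lambda>x. (T x, x / T x + y0)) ` (- subF k) \<subseteq> (subF k - {0}) \<times> subF k"
  proof
    fix p assume "p \<in> (\<lambda>x. (T x, x / T x + y0)) ` (- subF k :: 'a set)"
    then obtain x where x: "p = (T x, x / T x + y0)" "x \<notin> subF k" by auto
    then have Tx: "T x \<noteq> 0" by (simp add: T_zero_iff)
    have iK: "inverse (T x) \<in> subF k" by (rule K_inv[OF T_in_K])
    have "T (x / T x + y0) = inverse (T x) * T x + 1"
      using T_mult_K[OF iK, of x] y0 by (simp add: T_add divide_inverse mult.commute)
    then have "T (x / T x + y0) = 0" using Tx by simp
    then show "p \<in> (subF k - {0}) \<times> subF k" using x Tx T_in_K by (simp add: T_zero_iff)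
  qed
qed

lemma chi_pm: "chi (z::'a) \<in> {1, -1}" by (simp add: chi_def)

lemma bent:
  assumes r: "1 < r" "r < k" "coprime r k"
    and lam: "lam \<in> subF k" "lam \<noteq> 0"
    and phi: "\<And>c. c \<in> subF k \<Longrightarrow> (\<phi> c)^2 = (\<phi> c::'a)"
  shows "walsh n (\<lambda>x. tr k (lam * Gfun k r x) + \<phi> (T x)) a \<in> {2^k, -(2^k)}"
proof -
  define h where "h x = tr k (lam * Gfun k r x) + \<phi> (T x)" for x
  define F where "F x = chi (h x + tr n (a * x))" for x
  obtain y0 where y0: "T y0 = 1" using range_T K_1 by (metis rangeE)
  define c where "c = lam + T a"
  define q where "q = (2::nat)^(k-r)"
  define G0 where "G0 = y0^q + y0 + 1"
  define Gam where "Gam = lam * G0 + T (a * y0)"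
  define ell where "ell t = (t*lam)^(2^r) + c * t" for t
  define A where "A t = tr k (t * Gam) + \<phi> t" for t
  have cK: "c \<in> subF k" using lam by (simp add: c_def K_add T_in_K)
  have G0K: "G0 \<in> subF k" unfolding G0_def q_def using GY_in_K[OF Y_pow[OF y0]] r by simp
  have GamK: "Gam \<in> subF k" using lam G0K by (simp add: Gam_def K_add K_mult T_in_K)
  have ellK: "ell t \<in> subF k" if "t \<in> subF k" for t
    using that lam cK by (simp add: ell_def K_add K_mult K_pow)
  have Aidem: "(A t)^2 = A t" if "t \<in> subF k" for t
    using that GamK phi by (simp add: A_def idem_add tr_idem K_mult)
  have r1: "1 \<le> r" using r by simp
  have qr: "q * 2^r = 2^k" using r by (simp add: q_def power_add[symmetric])

  have W: "walsh n (\<lambda>x. tr k (lam * Gfun k r x) + \<phi> (T x)) a = (\<Sum>x\<in>UNIV. F x)"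
    by (simp add: walsh_chi F_def h_def)
  also have "\<dots> = (\<Sum>x\<in>subF k. F x) + (\<Sum>x\<in>- subF k. F x)"
    using sum.Int_Diff[of UNIV F "subF k"] by (simp add: Compl_eq_Diff_UNIV)
  finally have W: "walsh n (\<lambda>x. tr k (lam * Gfun k r x) + \<phi> (T x)) a
     = (\<Sum>x\<in>subF k. F x) + (\<Sum>x\<in>- subF k. F x)" .

  have FK: "F x = chi (\<phi> 0) * chi (tr k (x * c))" if x: "x \<in> subF k" for x
  proof -
    have "h x = tr k (lam * x) + \<phi> 0" using x r1 by (simp add: h_def G_K T_K)
    moreover have "tr n (a * x) = tr k (x * T a)"
    proof -
      have "T (x * a) = x * T a" by (rule T_mult_K[OF x])
      then have "T (a * x) = x * T a" by (simp add: mult.commute)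
      then show ?thesis by (simp add: tr_n)
    qed
    ultimately have "h x + tr n (a * x) = \<phi> 0 + tr k (x * c)"
      by (simp add: c_def distrib_left tr_add mult.commute add.commute add.left_commute)
    then show ?thesis unfolding F_def
      using chi_add[OF phi[OF K_0] tr_idem[OF K_mult[OF x cK]]] by simp
  qed
  have SK: "(\<Sum>x\<in>subF k. F x) = chi (\<phi> 0) * (if c = 0 then 2^k else 0)"
    using char_sum_K[OF cK] by (simp add: FK sum_distrib_left[symmetric])

  have Fts: "F (t * (y0 + s)) = chi (A t) * chi (tr k (s * ell t))"
    if t: "t \<in> subF k" and s: "s \<in> subF k" for t s
  proof -
    define y where "y = y0 + s"
    have Ty: "T y = 1" using y0 s by (simp add: y_def T_add T_K)
    have Gy: "Gfun k r y = G0 + s^q + s"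
      using G_Y[OF Y_pow[OF Ty] r1] r
      by (simp add: y_def G0_def q_def frob_add add.commute add.left_commute)
    have hty: "h (t * y) = tr k (lam * t * (G0 + s^q + s)) + \<phi> t"
      using t Ty by (simp add: h_def G_mult_K T_mult_K Gy mult.assoc mult.left_commute)
    have Tay: "T (a * y) = T (a * y0) + s * T a"
      using s by (simp add: y_def distrib_left T_add T_mult_K[symmetric] mult.commute)
    have trY: "tr n (a * (t * y)) = tr k (t * (T (a * y0) + s * T a))"
      using t by (simp add: tr_n mult.left_commute[of a t] T_mult_K Tay)
    have zK: "lam * t * s^q \<in> subF k" using lam t s by (simp add: K_mult K_pow)
    have frobz: "tr k (lam * t * s^q) = tr k (s * (t*lam)^(2^r))"
    proof -
      have "(lam * t * s^q)^(2^r) = (t*lam)^(2^r) * (s^(2^k))"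
        by (simp add: power_mult_distrib power_mult[symmetric] qr mult.commute)
      also have "s^(2^k) = s" using s by (simp add: inK)
      finally have "(lam * t * s^q)^(2^r) = s * (t*lam)^(2^r)" by (simp add: mult.commute)
      then show ?thesis using tr_frob_K[OF zK, of r] by simp
    qed
    have "h (t * y) + tr n (a * (t * y))
        = tr k (t * Gam) + tr k (lam * t * s^q) + tr k (t * s * c) + \<phi> t"
      unfolding hty trY Gam_def c_def
      by (simp add: tr_add distrib_left distrib_right mult.assoc mult.commute mult.left_commute add.assoc add.commute add.left_commute)
    also have "\<dots> = A t + tr k (s * ell t)"
      unfolding frobz A_def ell_def
      by (simp add: tr_add distrib_left mult.commute mult.left_commute add.assoc add.commute add.left_commute)
    finally have "h (t * y) + tr n (a * (t * y)) = A t + tr k (s * ell t)" .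
    then show ?thesis unfolding F_def y_def[symmetric]
      using chi_add[OF Aidem[OF t] tr_idem[OF K_mult[OF s ellK[OF t]]]] by simp
  qed

  have "(\<Sum>x\<in>- subF k. F x) = (\<Sum>p\<in>(subF k - {0}) \<times> subF k. F ((\<lambda>(t,s). t * (y0 + s)) p))"
    using sum.reindex_bij_betw[OF bij_decomp[OF y0], of F] by simp
  also have "\<dots> = (\<Sum>t\<in>subF k - {0}. \<Sum>s\<in>subF k. F (t * (y0 + s)))"
    by (simp add: sum.cartesian_product split_def)
  also have "\<dots> = (\<Sum>t\<in>subF k - {0}. chi (A t) * (if ell t = 0 then 2^k else 0))"
  proof (rule sum.cong[OF refl])
    fix t :: 'a assume "t \<in> subF k - {0}"
    then have t: "t \<in> subF k" by simp
    have "(\<Sum>s\<in>subF k. F (t * (y0 + s))) = chi (A t) * (\<Sum>s\<in>subF k. chi (tr k (s * ell t)))"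
      by (simp add: Fts[OF t] sum_distrib_left)
    then show "(\<Sum>s\<in>subF k. F (t * (y0 + s))) = chi (A t) * (if ell t = 0 then 2^k else 0)"
      using char_sum_K[OF ellK[OF t]] by simp
  qed
  finally have SnK: "(\<Sum>x\<in>- subF k. F x) = (\<Sum>t\<in>subF k - {0}. chi (A t) * (if ell t = 0 then 2^k else 0))" .

  show ?thesis
  proof (cases "c = 0")
    case True
    have "ell t \<noteq> 0" if "t \<in> subF k - {0}" for t
      using that lam True by (simp add: ell_def)
    then have "(\<Sum>x\<in>- subF k. F x) = 0" unfolding SnK by (intro sum.neutral) auto
    then show ?thesis using W SK True chi_pm[of "\<phi> 0"] by auto
  next
    case False
    have lr: "lam^(2^r) \<in> subF k" "lam^(2^r) \<noteq> 0" using lam by (auto simp: K_pow)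
    have "c / lam^(2^r) \<in> subF k" "c / lam^(2^r) \<noteq> 0" using cK lr False by (auto simp: K_div)
    then obtain t0 where t0: "t0 \<in> subF k" "t0 \<noteq> 0" "t0^(2^r-1) = c / lam^(2^r)"
      using pow_surj_K[OF r(3)] by blast
    have iff: "ell t = 0 \<longleftrightarrow> t = t0" if t: "t \<in> subF k" "t \<noteq> 0" for t
    proof -
      have pt: "t^(2^r) = t^(2^r-1) * t" by (metis power_Suc2 Suc_pred' pos2 zero_less_power One_nat_def)
      have "ell t = 0 \<longleftrightarrow> (t*lam)^(2^r) = c * t" by (simp add: ell_def add_eq0_iff)
      also have "\<dots> \<longleftrightarrow> t^(2^r-1) * lam^(2^r) * t = c * t" by (simp add: power_mult_distrib pt mult.commute mult.left_commute)
      also have "\<dots> \<longleftrightarrow> t^(2^r-1) * lam^(2^r) = c" using t by simp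
      also have "\<dots> \<longleftrightarrow> t^(2^r-1) = t0^(2^r-1)"
      proof -
        have "c = t0^(2^r-1) * lam^(2^r)" using t0 lr by (simp add: field_simps)
        then show ?thesis using lr by simp
      qed
      also have "\<dots> \<longleftrightarrow> t = t0" using pow_inj_K[OF r(3) t(1) t0(1) t(2) t0(2)] by auto
      finally show ?thesis .
    qed
    have "(\<Sum>x\<in>- subF k. F x) = (\<Sum>t\<in>subF k - {0}. if t = t0 then chi (A t0) * 2^k else 0)"
      unfolding SnK by (rule sum.cong[OF refl]) (auto simp: iff)
    also have "\<dots> = chi (A t0) * 2^k" using t0 by simp
    finally show ?thesis using W SK False chi_pm[of "A t0"] by auto
  qed
qed

lemma mono_bilin:
  assumes "bweight j \<le> 2"
  shows "(x + (e1 + e2))^j + x^j + (e1 + e2)^j + (0::'a)^j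
       = ((x + e1)^j + x^j + e1^j + 0^j) + ((x + e2)^j + x^j + e2^j + 0^j)"
proof -
  from bw2[OF assms] consider "j = 0" | a where "j = 2^a" | a b where "j = 2^a + 2^b" by blast
  then show ?thesis
  proof cases
    case 1 then show ?thesis by simp
  next
    case 2 then show ?thesis by (simp add: frob_add add.assoc)
  next
    case 3
    have "(x + (e1 + e2))^j + x^j + (e1 + e2)^j + (0::'a)^j
       = (x^(2^a) + e1^(2^a) + e2^(2^a)) * (x^(2^b) + e1^(2^b) + e2^(2^b)) + x^(2^a)*x^(2^b)
         + (e1^(2^a) + e2^(2^a)) * (e1^(2^b) + e2^(2^b))"
      using 3 by (simp add: power_add frob_add add.assoc)
    moreover have "((x + e1)^j + x^j + e1^j + 0^j) + ((x + e2)^j + x^j + e2^j + 0^j)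
       = ((x^(2^a) + e1^(2^a)) * (x^(2^b) + e1^(2^b)) + x^(2^a)*x^(2^b) + e1^(2^a)*e1^(2^b))
         + ((x^(2^a) + e2^(2^a)) * (x^(2^b) + e2^(2^b)) + x^(2^a)*x^(2^b) + e2^(2^a)*e2^(2^b))"
      using 3 by (simp add: power_add frob_add)
    moreover have "\<And>X1 X2 A1 A2 B1 B2 :: 'a.
        (X1 + A1 + B1) * (X2 + A2 + B2) + X1*X2 + (A1 + B1) * (A2 + B2)
      = ((X1 + A1) * (X2 + A2) + X1*X2 + A1*A2) + ((X1 + B1) * (X2 + B2) + X1*X2 + B1*B2)"
      by (subst ring_id2) simp
    ultimately show ?thesis by metis
  qed
qed

definition Bf :: "('a \<Rightarrow> 'a) \<Rightarrow> 'a \<Rightarrow> 'a \<Rightarrow> 'a" where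
  "Bf f x e = f (x + e) + f x + f e + f 0"

lemma Bf_sym: "Bf f x e = Bf f e x" by (simp add: Bf_def add.commute add.left_commute)

lemma quad_bilin:
  assumes "alg_deg_le f 2"
  shows "Bf f x (e1 + e2) = Bf f x e1 + Bf f x e2"
proof -
  obtain c where rep: "\<And>x. f x = (\<Sum>j<card (UNIV :: 'a set). c j * x ^ j)"
    and deg: "\<And>j. j < card (UNIV :: 'a set) \<Longrightarrow> c j \<noteq> 0 \<Longrightarrow> bweight j \<le> 2"
    using assms unfolding alg_deg_le_def by blast
  let ?N = "card (UNIV :: 'a set)"
  have Bs: "Bf f x e = (\<Sum>j<?N. c j * ((x + e)^j + x^j + e^j + 0^j))" for e
    by (simp add: Bf_def rep sum.distrib distrib_left)
  have "Bf f x (e1 + e2) = (\<Sum>j<?N. c j * ((x + e1)^j + x^j + e1^j + 0^j) + c j * ((x + e2)^j + x^j + e2^j + 0^j))"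
    unfolding Bs
  proof (rule sum.cong[OF refl])
    fix j assume j: "j \<in> {..<?N}"
    show "c j * ((x + (e1 + e2))^j + x^j + (e1 + e2)^j + 0^j)
        = c j * ((x + e1)^j + x^j + e1^j + 0^j) + c j * ((x + e2)^j + x^j + e2^j + 0^j)"
    proof (cases "c j = 0")
      case True then show ?thesis by simp
    next
      case False
      then have "bweight j \<le> 2" using deg j by simp
      then show ?thesis by (simp add: mono_bilin distrib_left)
    qed
  qed
  then show ?thesis by (simp add: Bs sum.distrib)
qed

lemma quad_bilin1:
  assumes "alg_deg_le f 2"
  shows "Bf f (x1 + x2) e = Bf f x1 e + Bf f x2 e"
  using quad_bilin[OF assms] Bf_sym by metis

lemma lagrange_add:
  assumes V0: "(0::'a) \<in> V" and Vadd: "\<And>x y. x \<in> V \<Longrightarrow> y \<in> V \<Longrightarrow> x + y \<in> V"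
  shows "card V dvd 2^n"
proof -
  define C where "C = (\<lambda>x. (+) x ` V) ` (UNIV::'a set)"
  have cardc: "card c = card V" if "c \<in> C" for c
    using that unfolding C_def by (auto intro!: card_image simp: inj_on_def)
  have disj: "c1 \<inter> c2 = {}" if cc: "c1 \<in> C" "c2 \<in> C" "c1 \<noteq> c2" for c1 c2
  proof (rule ccontr)
    assume "c1 \<inter> c2 \<noteq> {}"
    obtain x1 x2 where c: "c1 = (+) x1 ` V" "c2 = (+) x2 ` V" using cc unfolding C_def by auto
    from \<open>c1 \<inter> c2 \<noteq> {}\<close> obtain v1 v2 where v: "v1 \<in> V" "v2 \<in> V" "x1 + v1 = x2 + v2"
      unfolding c by auto
    have xx: "x1 + x2 \<in> V"
    proof -
      have "x1 + x2 = v1 + v2" using v(3) by (metis add.assoc add_self add_0_right add.commute)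
      then show ?thesis using v Vadd by simp
    qed
    have "c1 = c2"
    proof -
      have "(+) x1 ` V \<subseteq> (+) x2 ` V"
      proof
        fix z assume "z \<in> (+) x1 ` V"
        then obtain u where u: "u \<in> V" "z = x1 + u" by auto
        then have "z = x2 + ((x1 + x2) + u)" by (simp add: add.commute add.left_commute)
        then show "z \<in> (+) x2 ` V" using Vadd[OF xx u(1)] by blast
      qed
      moreover have "(+) x2 ` V \<subseteq> (+) x1 ` V"
      proof
        fix z assume "z \<in> (+) x2 ` V"
        then obtain u where u: "u \<in> V" "z = x2 + u" by auto
        then have "z = x1 + ((x1 + x2) + u)" by (simp add: add.commute add.left_commute)
        then show "z \<in> (+) x1 ` V" using Vadd[OF xx u(1)] by blast
      qed
      ultimately show ?thesis using c by blast
    qed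
    then show False using cc by simp
  qed
  have "card V * card C = card (\<Union>C)"
    by (rule card_partition) (auto simp: cardc disj)
  moreover have "\<Union>C = UNIV"
  proof -
    have "x \<in> (+) x ` V" for x :: 'a using V0 by (metis add_0_right imageI)
    then show ?thesis unfolding C_def by blast
  qed
  ultimately show ?thesis using cardL by (metis dvd_triv_left)
qed

lemma quad_plateaued:
  assumes idem: "\<And>x. (f x)^2 = (f x::'a)" and quad: "alg_deg_le f 2"
  shows "plateaued n f"
proof -
  define V where "V = {e. \<forall>x. Bf f x e = 0}"
  have Bidem: "(Bf f x e)^2 = Bf f x e" for x e by (simp add: Bf_def idem idem_add)
  have V0: "0 \<in> V" by (simp add: V_def Bf_def)
  have Vadd: "x + y \<in> V" if "x \<in> V" "y \<in> V" for x y
    using that by (simp add: V_def quad_bilin[OF quad])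
  define W where "W a = walsh n f a" for a
  have Wsq: "(W a)^2 \<in> {0, 2^n * int (card V)}" for a
  proof -
    define g where "g x = f x + tr n (a * x)" for x
    define psi where "psi e = f e + f 0 + tr n (a * e)" for e
    have gidem: "(g x)^2 = g x" for x by (simp add: g_def idem_add idem tr_n_idem)
    have psiidem: "(psi e)^2 = psi e" for e by (simp add: psi_def idem_add idem tr_n_idem)
    have Wg: "W a = (\<Sum>x\<in>UNIV. chi (g x))" by (simp add: W_def walsh_chi g_def)
    have "(W a)^2 = (\<Sum>x\<in>UNIV. \<Sum>y\<in>UNIV. chi (g x) * chi (g y))"
      by (simp add: Wg power2_eq_square sum_product)
    also have "\<dots> = (\<Sum>x\<in>UNIV. \<Sum>e\<in>UNIV. chi (g x) * chi (g (x + e)))"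
    proof (rule sum.cong[OF refl])
      fix x :: 'a
      have b: "bij_betw (\<lambda>e. x + e) UNIV UNIV"
        by (rule bij_betw_byWitness[where f'="\<lambda>y. x + y"]) (auto simp: add.assoc[symmetric])
      show "(\<Sum>y\<in>UNIV. chi (g x) * chi (g y)) = (\<Sum>e\<in>UNIV. chi (g x) * chi (g (x + e)))"
        using sum.reindex_bij_betw[OF b, of "\<lambda>y. chi (g x) * chi (g y)"] by simp
    qed
    also have "\<dots> = (\<Sum>e\<in>UNIV. \<Sum>x\<in>UNIV. chi (psi e) * chi (Bf f x e))"
    proof -
      have "chi (g x) * chi (g (x + e)) = chi (psi e) * chi (Bf f x e)" for x e
      proof -
        have "g x + g (x + e) = psi e + Bf f x e"
          by (simp add: g_def psi_def Bf_def distrib_left tr_add add.commute add.left_commute)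
        then show ?thesis using chi_add[OF gidem gidem, of x "x + e"] chi_add[OF psiidem Bidem, of e x e] by simp
      qed
      then have "(\<Sum>x\<in>UNIV. \<Sum>e\<in>UNIV. chi (g x) * chi (g (x + e)))
          = (\<Sum>x\<in>UNIV. \<Sum>e\<in>UNIV. chi (psi e) * chi (Bf f x e))" by simp
      also have "\<dots> = (\<Sum>e\<in>UNIV. \<Sum>x\<in>UNIV. chi (psi e) * chi (Bf f x e))" by (rule sum.swap)
      finally show ?thesis .
    qed
    also have "\<dots> = (\<Sum>e\<in>UNIV. chi (psi e) * (if e \<in> V then 2^n else 0))"
    proof (rule sum.cong[OF refl])
      fix e
      have "(\<Sum>x\<in>UNIV. chi (Bf f x e)) = (if \<forall>x\<in>UNIV. Bf f x e = 0 then int (card (UNIV::'a set)) else 0)"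
        by (rule char_sum) (auto simp: quad_bilin1[OF quad] Bidem)
      then show "(\<Sum>x\<in>UNIV. chi (psi e) * chi (Bf f x e)) = chi (psi e) * (if e \<in> V then 2^n else 0)"
        by (simp add: sum_distrib_left[symmetric] V_def cardL)
    qed
    also have "\<dots> = 2^n * (\<Sum>e\<in>V. chi (psi e))"
      by (simp add: sum_distrib_left if_distrib sum.If_cases mult.commute)
    also have "(\<Sum>e\<in>V. chi (psi e)) = (if \<forall>e\<in>V. psi e = 0 then int (card V) else 0)"
    proof (rule char_sum)
      show "x + y \<in> V" if "x \<in> V" "y \<in> V" for x y using Vadd that .
      show "(psi x)^2 = psi x" for x by (rule psiidem)
      show "psi (x + y) = psi x + psi y" if "x \<in> V" "y \<in> V" for x y
      proof -
        have "Bf f x y = 0" using that by (simp add: V_def)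
        then have "f (x + y) = f x + f y + f 0"
        proof -
          have "f (x + y) + f x + f y + f 0 = 0" using \<open>Bf f x y = 0\<close> by (simp only: Bf_def)
          then have "f (x + y) = - (f x + f y + f 0)" by (rule sum4_eq0)
          then show ?thesis by simp
        qed
        then show ?thesis by (simp add: psi_def distrib_left tr_add add.commute add.left_commute)
      qed
    qed
    finally show ?thesis by simp
  qed
  obtain d where d: "card V = 2^d" "d \<le> n"
    using lagrange_add[OF V0 Vadd] divides_primepow_nat[of 2 "card V" n] by auto
  show ?thesis
  proof (cases "\<forall>a. W a = 0")
    case True
    then show ?thesis unfolding plateaued_def using npos by (intro exI[of _ n]) (auto simp: W_def)
  next
    case False
    then obtain a0 where a0: "W a0 \<noteq> 0" by blast
    then have "(W a0)^2 = 2^(n+d)" using Wsq[of a0] d by (simp add: power_add)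
    then have ev: "even (n + d)" by (rule sq_pow2_even)
    define s where "s = (n + d) div 2"
    have ns: "n + d = 2 * s" using ev by (simp add: s_def)
    have "W a \<in> {0, 2^s, -(2^s)}" for a
    proof -
      have "(W a)^2 = 0 \<or> (W a)^2 = (2^s)^2"
      proof -
        have "(2::int)^n * int (card V) = 2^(n+d)" using d by (simp add: power_add)
        also have "\<dots> = (2^s)^2" unfolding ns by (metis power_mult mult.commute)
        finally show ?thesis using Wsq[of a] by auto
      qed
      then show ?thesis by (auto simp: power2_eq_iff)
    qed
    moreover have "n \<le> 2 * s" "s \<le> n" using ns d by auto
    ultimately show ?thesis unfolding plateaued_def W_def by blast
  qed
qed

lemma adl_add:
  assumes "alg_deg_le f d" "alg_deg_le g d"
  shows "alg_deg_le (\<lambda>x. f x + g x :: 'a) d"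
proof -
  obtain c where c: "\<forall>x. f x = (\<Sum>j<card (UNIV :: 'a set). c j * x ^ j)"
    "\<forall>j<card (UNIV :: 'a set). c j \<noteq> 0 \<longrightarrow> bweight j \<le> d"
    using assms(1) unfolding alg_deg_le_def by blast
  obtain e where e: "\<forall>x. g x = (\<Sum>j<card (UNIV :: 'a set). e j * x ^ j)"
    "\<forall>j<card (UNIV :: 'a set). e j \<noteq> 0 \<longrightarrow> bweight j \<le> d"
    using assms(2) unfolding alg_deg_le_def by blast
  have "\<forall>x. f x + g x = (\<Sum>j<card (UNIV :: 'a set). (c j + e j) * x ^ j)"
    using c(1) e(1) by (simp add: sum.distrib distrib_right)
  moreover have "\<forall>j<card (UNIV :: 'a set). c j + e j \<noteq> 0 \<longrightarrow> bweight j \<le> d"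
  proof (intro allI impI)
    fix j assume "j < card (UNIV :: 'a set)" "c j + e j \<noteq> 0"
    then have "c j \<noteq> 0 \<or> e j \<noteq> 0" by auto
    then show "bweight j \<le> d" using c(2) e(2) \<open>j < _\<close> by blast
  qed
  ultimately show ?thesis unfolding alg_deg_le_def by (intro exI[of _ "\<lambda>j. c j + e j"]) simp
qed

lemma adl_zero: "alg_deg_le (\<lambda>x. 0 :: 'a) d"
  unfolding alg_deg_le_def by (rule exI[of _ "\<lambda>_. 0"]) simp

lemma vcomb_quad:
  assumes "\<forall>i<t. alg_deg_le (f i) 2"
  shows "alg_deg_le (vcomb t v f :: 'a \<Rightarrow> 'a) 2"
  using assms
proof (induction t)
  case 0
  have "vcomb 0 v f = (\<lambda>x. 0 :: 'a)" by (simp add: vcomb_def fun_eq_iff)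
  then show ?case by (simp add: adl_zero)
next
  case (Suc t)
  have IH: "alg_deg_le (vcomb t v f) 2" using Suc by simp
  have ft: "alg_deg_le (\<lambda>x. if v t then f t x else 0) 2"
  proof (cases "v t")
    case True
    have "(\<lambda>x. if v t then f t x else 0) = f t" using True by (simp add: fun_eq_iff)
    then show ?thesis using Suc.prems by simp
  next
    case False then show ?thesis by (simp add: adl_zero)
  qed
  have "vcomb (Suc t) v f = (\<lambda>x. vcomb t v f x + (if v t then f t x else 0))"
    by (simp add: vcomb_def fun_eq_iff)
  then show ?case using adl_add[OF IH ft] by simp
qed

lemma notquad:
  assumes r: "1 < r" "r < k" "coprime r k"
  shows "\<not> alg_deg_le (\<lambda>x. tr k (Gfun k r (x::'a))) 2"
proof
  assume quad: "alg_deg_le (\<lambda>x. tr k (Gfun k r (x::'a))) 2"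
  define h where "h x = tr k (Gfun k r (x::'a))" for x
  obtain y0 where y0: "T y0 = 1" using range_T K_1 by (metis rangeE)
  define q where "q = (2::nat)^(k-r)"
  define G0 where "G0 = y0^q + y0 + 1"
  have G0K: "G0 \<in> subF k" unfolding G0_def q_def using GY_in_K[OF Y_pow[OF y0]] r by simp
  have r1: "1 \<le> r" using r by simp
  have qr: "q * 2^r = 2^k" using r by (simp add: q_def power_add[symmetric])
  have r0: "0 < 2^r - (1::nat)" using one_less_power[of "2::nat" r] r by simp
  have hK: "h s = tr k s" if "s \<in> subF k" for s using that r1 by (simp add: h_def G_K)
  have h0: "h 0 = 0" by (simp add: h_def)
  have Bst: "Bf h s (t * y0) = tr k (s * t^(2^r-1))" if s: "s \<in> subF k" and t: "t \<in> subF k" for s t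
  proof (cases "t = 0")
    case True
    then show ?thesis using r0 by (simp add: Bf_def h0 power_0_left)
  next
    case False
    define y where "y = y0 + s / t"
    have sK: "s / t \<in> subF k" using s t by (simp add: K_div)
    have Ty: "T y = 1" using y0 sK by (simp add: y_def T_add T_K)
    have Gy: "Gfun k r y = G0 + (s/t)^q + s/t"
      using G_Y[OF Y_pow[OF Ty] r1] r
      by (simp add: y_def G0_def q_def frob_add add.commute add.left_commute)
    have st: "s + t * y0 = t * y" using False by (simp add: y_def distrib_left add.commute)
    have zK: "t * (s/t)^q \<in> subF k" using t sK by (simp add: K_mult K_pow)
    have frobz: "tr k (t * (s/t)^q) = tr k (s * t^(2^r-1))"
    proof -
      have "(t * (s/t)^q)^(2^r) = t^(2^r) * ((s/t)^(2^k))"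
        by (simp add: power_mult_distrib power_mult[symmetric] qr)
      also have "(s/t)^(2^k) = s/t" using sK by (simp add: inK)
      also have "t^(2^r) * (s/t) = s * t^(2^r-1)"
      proof -
        have "t^(2^r) = t^(2^r-1) * t" by (metis power_Suc2 Suc_pred' pos2 zero_less_power One_nat_def)
        then show ?thesis using False by simp
      qed
      finally show ?thesis using tr_frob_K[OF zK, of r] by simp
    qed
    have "h (s + t * y0) = tr k (t * G0) + tr k (t * (s/t)^q) + tr k s"
      unfolding st h_def using t False
      by (simp add: G_mult_K Gy distrib_left tr_add)
    moreover have "h (t * y0) = tr k (t * G0)"
      using t by (simp add: h_def G_mult_K G0_def q_def G_Y[OF Y_pow[OF y0] r1] r)
    ultimately show ?thesis using hK[OF s] h0 frobz
      by (simp add: Bf_def add.commute add.left_commute)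
  qed
  have key: "t^(2^r-1) = t" if t: "(t::'a) \<in> subF k" for t
  proof -
    have tK1: "1 + t \<in> subF k" using t by (simp add: K_add)
    have "Bf h s ((1 + t) * y0) = Bf h s (1 * y0) + Bf h s (t * y0)" for s
    proof -
      have "h = (\<lambda>x. tr k (Gfun k r x))" by (simp add: fun_eq_iff h_def)
      then have hq: "alg_deg_le h 2" using quad by simp
      show ?thesis using quad_bilin[OF hq, of s y0 "t * y0"] by (simp add: distrib_right)
    qed
    then have e: "tr k (s * (1 + t)^(2^r-1)) = tr k (s * 1^(2^r-1)) + tr k (s * t^(2^r-1))"
      if "s \<in> subF k" for s using Bst[OF that tK1] Bst[OF that K_1] Bst[OF that t] by simp
    define w where "w = (1 + t)^(2^r-1) + 1 + t^(2^r-1)"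
    have wK: "w \<in> subF k" using t tK1 by (simp add: w_def K_add K_pow)
    have "tr k (s * w) = 0" if "s \<in> subF k" for s
      using e[OF that] by (simp add: w_def distrib_left tr_add)
    then have "w = 0" using tr_nondeg[OF wK] by auto
    then have w': "(1 + t)^(2^r-1) = 1 + t^(2^r-1)" by (simp add: w_def add_eq0_iff add.assoc)
    have "(1 + t)^(2^r) = (1 + t)^(2^r-1) * (1 + t)" by (metis power_Suc2 Suc_pred' pos2 zero_less_power One_nat_def)
    also have "\<dots> = (1 + t^(2^r-1)) * (1 + t)" by (simp only: w')
    also have "\<dots> = 1 + t + t^(2^r-1) + t^(2^r-1) * t" by (simp add: algebra_simps)
    also have "t^(2^r-1) * t = t^(2^r)" by (metis power_Suc2 Suc_pred' pos2 zero_less_power One_nat_def)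
    finally have "1 + t^(2^r) = 1 + t + t^(2^r-1) + t^(2^r)" by (simp add: frob_add)
    then have "t + t^(2^r-1) = 0" by (simp add: add.commute add.left_commute)
    then show ?thesis by (simp add: add_eq0_iff)
  qed
  have "1 < 2^r - (1::nat)"
  proof -
    have "(2::nat)^2 \<le> 2^r" using r by (intro power_increasing) auto
    then show ?thesis by simp
  qed
  moreover have "2^r - 1 < card (subF k :: 'a set)"
  proof -
    have "(2::nat)^r < 2^k" using r by simp
    then have "(2::nat)^r - 1 < 2^k" by linarith
    then show ?thesis using card_K by simp
  qed
  ultimately obtain t where "t \<in> (subF k :: 'a set)" "t^(2^r-1) \<noteq> t^1"
    using binom_nonroot by blast
  then show False using key by simp
qed

end
theorem corollary7:
  fixes n k r t :: nat and u :: "nat \<Rightarrow> 'a::{field,finite}"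
    and Fs :: "nat \<Rightarrow> nat set set"
  assumes card: "card (UNIV :: 'a set) = 2 ^ n"
    and nk: "n = 2 * k"
    and r: "1 < r" "r < k" "coprime r k"
    and u_in: "\<forall>j<k. u j \<in> subF k"
    and u_indep: "\<forall>c :: nat \<Rightarrow> bool. (\<Sum>j<k. if c j then u j else 0) = 0 \<longrightarrow> (\<forall>j<k. \<not> c j)"
    and u_span: "\<forall>y\<in>subF k. \<exists>c :: nat \<Rightarrow> bool. y = (\<Sum>j<k. if c j then u j else 0)"
    and t: "0 < t"
    and reduced: "\<forall>i<t. Fs i \<subseteq> Pow {0..<k}"
  shows "(H_vplateaued n k (Gfun k r) t (\<lambda>i x. eval_reduced (Fs i) (\<lambda>j. tr n (u j * x)))
            \<longleftrightarrow> F_vplateaued n t (\<lambda>i x. eval_reduced (Fs i) (\<lambda>j. tr n (u j * x))))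
       \<and> ((2 < k \<and> (\<forall>i<t. alg_deg_le (\<lambda>x. eval_reduced (Fs i) (\<lambda>j. tr n (u j * x))) 2))
            \<longrightarrow> H_vplateaued n k (Gfun k r) t (\<lambda>i x. eval_reduced (Fs i) (\<lambda>j. tr n (u j * x)))
              \<and> \<not> H_quadratic k (Gfun k r) t (\<lambda>i x. eval_reduced (Fs i) (\<lambda>j. tr n (u j * x))))"
proof -
  have k0: "0 < k" using r by simp
  interpret ff n k "TYPE('a)" by unfold_locales (use card nk k0 in auto)
  define f where "f = (\<lambda>i x. eval_reduced (Fs i) (\<lambda>j. tr n (u j * (x::'a))))"
  define Phi where "Phi v c = vcomb t v (\<lambda>i c. eval_reduced (Fs i) (\<lambda>j. tr k (u j * (c::'a)))) c" for v c
  have fT: "vcomb t v f x = Phi v (T x)" for v x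
    unfolding Phi_def vcomb_def f_def
  proof (rule sum.cong[OF refl])
    fix i assume i: "i \<in> {..<t}"
    have "eval_reduced (Fs i) (\<lambda>j. tr n (u j * x)) = eval_reduced (Fs i) (\<lambda>j. tr k (u j * T x))"
      unfolding eval_reduced_def
    proof (rule sum.cong[OF refl], rule prod.cong[OF refl])
      fix S j assume Sj: "S \<in> Fs i" "j \<in> S"
      have "Fs i \<subseteq> Pow {0..<k}" using reduced i by simp
      then have "j < k" using Sj by (meson PowD atLeastLessThan_iff subsetD)
      then have "u j \<in> subF k" using u_in by simp
      then show "tr n (u j * x) = tr k (u j * T x)" by (simp add: tr_n T_mult_K)
    qed
    then show "(if v i then eval_reduced (Fs i) (\<lambda>j. tr n (u j * x)) else 0)
        = (if v i then eval_reduced (Fs i) (\<lambda>j. tr k (u j * T x)) else 0)" by simp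
  qed
  have fidem: "(f i x)^2 = f i x" for i x
    unfolding f_def eval_reduced_def by (intro idem_sum idem_prod tr_n_idem)
  have videm: "(vcomb t v f x)^2 = vcomb t v f x" for v x
    unfolding vcomb_def by (intro idem_sum) (auto simp: fidem)
  have uK: "u j \<in> subF k" if "i < t" "S \<in> Fs i" "j \<in> S" for i S j
  proof -
    have "Fs i \<subseteq> Pow {0..<k}" using reduced that(1) by simp
    then have "j < k" using that by (meson PowD atLeastLessThan_iff subsetD)
    then show ?thesis using u_in by simp
  qed
  have Phiidem: "(Phi v c)^2 = Phi v c" if "c \<in> subF k" for v c
    unfolding Phi_def vcomb_def eval_reduced_def
    by (intro idem_sum) (auto intro!: idem_sum idem_prod tr_idem K_mult that uK)
  have H0: "Hcomp k (Gfun k r) t f 0 v = vcomb t v f" for v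
    by (simp add: fun_eq_iff Hcomp_def)
  have Hlam: "Hcomp k (Gfun k r) t f lam v = (\<lambda>x. tr k (lam * Gfun k r x) + Phi v (T x))" for lam v
    by (simp add: fun_eq_iff Hcomp_def fT)
  have bentpl: "plateaued n (Hcomp k (Gfun k r) t f lam v)" if "lam \<in> subF k" "lam \<noteq> 0" for lam v
  proof -
    have "walsh n (Hcomp k (Gfun k r) t f lam v) a \<in> {0, 2^k, -(2^k)}" for a
      using bent[OF r that, of "Phi v" a] Phiidem unfolding Hlam by auto
    then show ?thesis unfolding plateaued_def using nk by (intro exI[of _ k]) auto
  qed
  have iff: "H_vplateaued n k (Gfun k r) t f \<longleftrightarrow> F_vplateaued n t f"
  proof
    assume H: "H_vplateaued n k (Gfun k r) t f"
    show "F_vplateaued n t f" unfolding F_vplateaued_def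
    proof (intro allI impI)
      fix v assume "\<exists>i<t. v i"
      then have "plateaued n (Hcomp k (Gfun k r) t f 0 v)" using H unfolding H_vplateaued_def by auto
      then show "plateaued n (vcomb t v f)" by (simp add: H0)
    qed
  next
    assume F: "F_vplateaued n t f"
    show "H_vplateaued n k (Gfun k r) t f" unfolding H_vplateaued_def
    proof (intro ballI allI impI)
      fix lam :: 'a and v assume lam: "lam \<in> subF k" and nz: "lam \<noteq> 0 \<or> (\<exists>i<t. v i)"
      show "plateaued n (Hcomp k (Gfun k r) t f lam v)"
      proof (cases "lam = 0")
        case True
        then have "\<exists>i<t. v i" using nz by simp
        then show ?thesis using F True unfolding F_vplateaued_def by (simp add: H0)
      next
        case False then show ?thesis using bentpl[OF lam] by simp
      qed
    qed
  qed
  have part2: "H_vplateaued n k (Gfun k r) t f \<and> \<not> H_quadratic k (Gfun k r) t f"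
    if q: "\<forall>i<t. alg_deg_le (f i) 2"
  proof
    have "F_vplateaued n t f" unfolding F_vplateaued_def
      using quad_plateaued[OF videm vcomb_quad[OF q]] by blast
    then show "H_vplateaued n k (Gfun k r) t f" using iff by simp
  next
    show "\<not> H_quadratic k (Gfun k r) t f"
    proof
      assume "H_quadratic k (Gfun k r) t f"
      then have "alg_deg_le (Hcomp k (Gfun k r) t f 1 (\<lambda>_. False)) 2"
        unfolding H_quadratic_def by simp
      moreover have "Hcomp k (Gfun k r) t f 1 (\<lambda>_. False) = (\<lambda>x. tr k (Gfun k r x))"
        by (simp add: fun_eq_iff Hcomp_def vcomb_def)
      ultimately show False using notquad[OF r] by simp
    qed
  qed
  show ?thesis using iff part2 unfolding f_def by blast
qed

end
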